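(* Let $\widehat{\boldsymbol\Sigma}\succ0$ and $l_{\widehat{\boldsymbol\Sigma}}(\mathbf x)=\mathbf x^\top\widehat{\boldsymbol\Sigma}^{-1}\mathbf x$. Define the probability measure $\mathrm{Lev}_{\widehat{\boldsymbol\Sigma},\mathcal X}$ on $\mathbb R^d$ by $\mathrm{Lev}_{\widehat{\boldsymbol\Sigma},\mathcal X}(A)=\mathbb E_{D_{\mathcal X}}\big[\mathbf 1_A\,l_{\widehat{\boldsymbol\Sigma}}(\mathbf x)/\mathrm{tr}(\boldsymbol\Sigma_{D_{\mathcal X}}\widehat{\boldsymbol\Sigma}^{-1})\big]$. Let $t\ge d$, let $\mathbf x_1,\dots,\mathbf x_t$ be i.i.d. from $\mathrm{Lev}_{\widehat{\boldsymbol\Sigma},\mathcal X}$, let $\widetilde{\mathbf x}_i=\sqrt{d}\,\mathbf x_i/\sqrt{l_{\widehat{\boldsymbol\Sigma}}(\mathbf x_i)}$ and $\widetilde{\boldsymbol\Sigma}=\frac1t\sum_{i=1}^t\widetilde{\mathbf x}_i\widetilde{\mathbf x}_i^\top$. Then $\det(\widetilde{\boldsymbol\Sigma}\widehat{\boldsymbol\Sigma}^{-1})\le1$ almost surely, and $\mathbb E\big[\det(\widetilde{\boldsymbol\Sigma}\widehat{\boldsymbol\Sigma}^{-1})\big]\ge\Big(1-\dfrac{d^2}{t}\Big)\dfrac{\det(\boldsymbol\Sigma_{D_{\mathcal X}}\widehat{\boldsymbol\Sigma}^{-1})}{\big(\frac1d\mathrm{tr}(\boldsymbol\Sigma_{D_{\mathcal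 X}}\widehat{\boldsymbol\Sigma}^{-1})\big)^d}$.
   Context: $D_{\mathcal X}$ is a probability distribution on $\mathbb R^d$ with $\mathbb E\|\mathbf x\|^2<\infty$ and invertible $\boldsymbol\Sigma_{D_{\mathcal X}}:=\mathbb E[\mathbf x\mathbf x^\top]$. *)

theory Defs
  imports "HOL-Analysis.Analysis" "HOL-Probability.Probability"
begin

definition pos_def_mat :: "real^'n^'n \<Rightarrow> bool" where
  "pos_def_mat A \<longleftrightarrow> transpose A = A \<and> (\<forall>x. x \<noteq> 0 \<longrightarrow> x \<bullet> (A *v x) > 0)"

definition outer :: "real^'n \<Rightarrow> real^'n^'n" where
  "outer x = (\<chi> i j. x$i * x$j)"

definition second_moment :: "(real^'n) measure \<Rightarrow> real^'n^'n" where
  "second_moment M = (\<chi> i j. \<integral>x. x$i * x$j \<partial>M)"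

definition lev_score :: "real^'n^'n \<Rightarrow> real^'n \<Rightarrow> real" where
  "lev_score S x = x \<bullet> (matrix_inv S *v x)"

definition lev_measure :: "real^'n^'n \<Rightarrow> (real^'n) measure \<Rightarrow> (real^'n) measure" where
  "lev_measure S M = density M (\<lambda>x. ennreal (lev_score S x / trace (second_moment M ** matrix_inv S)))"

definition rescaled_cov :: "real^'n^'n \<Rightarrow> nat \<Rightarrow> (nat \<Rightarrow> real^'n) \<Rightarrow> real^'n^'n" where
  "rescaled_cov S t xs = (1 / real t) *\<^sub>R
     (\<Sum>i<t. outer ((sqrt (real CARD('n)) / sqrt (lev_score S (xs i))) *\<^sub>R xs i))"

end

theory Submission
  imports Defs "HOL-Library.FuncSet"
begin

lemma inner_sym_mat:
  fixes M :: "real^'n^'n"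
  assumes "transpose M = M"
  shows "x \<bullet> (M *v y) = y \<bullet> (M *v x)"
proof -
  have "x \<bullet> (M *v y) = (x v* M) \<bullet> y" by (simp add: dot_lmul_matrix)
  also have "x v* M = transpose M *v x" by simp
  finally show ?thesis using assms by (simp add: inner_commute)
qed

lemma quad_zero:
  fixes a b :: real
  assumes "\<And>e. 2*e*b + e^2*a \<le> 0"
  shows "b = 0"
proof -
  define c where "c = \<bar>a\<bar> + 1"
  have pos: "c > 0" unfolding c_def by simp
  define e where "e = b / c"
  have "2*e*b + e^2*a \<le> 0" by (rule assms)
  moreover have "2*e*b + e^2*a = b^2*(2*c + a)/c^2"
    unfolding e_def using pos by (simp add: field_simps power2_eq_square)
  ultimately have "b^2*(2*c + a)/c^2 \<le> 0" by simp
  hence "b^2 * (2*c + a) \<le> 0"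
    using pos by (simp add: divide_le_0_iff)
  moreover have "2*c + a > 0" unfolding c_def by (cases "a \<ge> 0") auto
  ultimately have "b^2 \<le> 0" by (simp add: mult_le_0_iff)
  thus "b = 0" by simp
qed

lemma amgm_exp:
  fixes l :: "'i \<Rightarrow> real"
  assumes fin: "finite I" and ne: "I \<noteq> {}" and nn: "\<And>i. i \<in> I \<Longrightarrow> 0 \<le> l i"
  shows "(\<Prod>i\<in>I. l i) \<le> ((\<Sum>i\<in>I. l i) / card I) ^ card I"
proof -
  define m where "m = (\<Sum>i\<in>I. l i) / card I"
  have cpos: "card I > 0" using fin ne by (simp add: card_gt_0_iff)
  have m0: "m \<ge> 0" unfolding m_def using nn by (simp add: sum_nonneg)
  show ?thesis
  proof (cases "m = 0")
    case True
    hence "(\<Sum>i\<in>I. l i) = 0" unfolding m_def using cpos by simp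
    hence "\<forall>i\<in>I. l i = 0" using sum_nonneg_eq_0_iff[OF fin] nn by blast
    then obtain i where "i \<in> I" "l i = 0" using ne by blast
    hence "(\<Prod>i\<in>I. l i) = 0" using fin by (meson prod_zero_iff)
    thus ?thesis using True cpos unfolding m_def[symmetric] by simp
  next
    case False
    hence mp: "m > 0" using m0 by simp
    have "\<And>i. i \<in> I \<Longrightarrow> l i \<le> m * exp (l i / m - 1)"
    proof -
      fix i assume "i \<in> I"
      have "1 + (l i / m - 1) \<le> exp (l i / m - 1)" by (rule exp_ge_add_one_self)
      hence "l i / m \<le> exp (l i / m - 1)" by simp
      thus "l i \<le> m * exp (l i / m - 1)" using mp by (simp add: divide_le_eq mult.commute)
    qed
    hence "(\<Prod>i\<in>I. l i) \<le> (\<Prod>i\<in>I. m * exp (l i / m - 1))"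
      by (intro prod_mono) (auto simp: nn)
    also have "\<dots> = m ^ card I * exp (\<Sum>i\<in>I. (l i / m - 1))"
      using fin by (simp add: prod.distrib exp_sum)
    also have "(\<Sum>i\<in>I. (l i / m - 1)) = (\<Sum>i\<in>I. l i) / m - card I"
      by (simp add: sum_subtractf sum_divide_distrib)
    also have "(\<Sum>i\<in>I. l i) / m = card I" proof -
      have "(\<Sum>i\<in>I. l i) \<noteq> 0" using mp unfolding m_def by auto
      thus ?thesis unfolding m_def using cpos by simp
    qed
    finally show ?thesis unfolding m_def by simp
  qed
qed

lemma cont_quad:
  fixes M :: "real^'n^'n"
  shows "continuous_on S (\<lambda>x. x \<bullet> (M *v x))"
proof -
  have "continuous_on S ((*v) M)"
    by (intro linear_continuous_on matrix_vector_mul_bounded_linear)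
  thus ?thesis by (intro continuous_intros)
qed

lemma quad_expand:
  fixes M :: "real^'n^'n"
  assumes "transpose M = M"
  shows "(v + e *\<^sub>R w) \<bullet> (M *v (v + e *\<^sub>R w)) =
         v \<bullet> (M *v v) + 2 * e * (w \<bullet> (M *v v)) + e^2 * (w \<bullet> (M *v w))"
proof -
  have s: "v \<bullet> (M *v w) = w \<bullet> (M *v v)" by (rule inner_sym_mat[OF assms])
  show ?thesis
    by (simp add: matrix_vector_right_distrib matrix_vector_mult_scaleR inner_add_left
        inner_add_right s algebra_simps power2_eq_square)
qed

lemma eig_step:
  fixes A C :: "real^'n^'n" and u :: "'n \<Rightarrow> real^'n" and lam :: "'n \<Rightarrow> real"
  assumes symA: "transpose A = A" and symC: "transpose C = C"
    and pdC: "\<And>x. x \<noteq> 0 \<Longrightarrow> 0 < x \<bullet> (C *v x)"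
    and cardF: "card F < CARD('n)"
    and eig: "\<And>j. j \<in> F \<Longrightarrow> (A ** C) *v u j = lam j *\<^sub>R u j"
  shows "\<exists>v \<mu>. v \<noteq> 0 \<and> (\<forall>j\<in>F. u j \<bullet> (C *v v) = 0) \<and> (A ** C) *v v = \<mu> *\<^sub>R v"
proof -
  define B where "B = C ** A ** C"
  have symB: "transpose B = B" unfolding B_def
    by (simp add: matrix_transpose_mul symA symC matrix_mul_assoc)
  have finF: "finite F" by simp
  define W where "W = {x. \<forall>j\<in>F. u j \<bullet> (C *v x) = 0}"
  have W_add: "x + y \<in> W" if "x \<in> W" "y \<in> W" for x y
    using that by (simp add: W_def matrix_vector_right_distrib inner_add_right)
  have W_scale: "c *\<^sub>R x \<in> W" if "x \<in> W" for x c
    using that by (simp add: W_def matrix_vector_mult_scaleR)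
  have W0: "0 \<in> W" by (simp add: W_def)
  have subW: "subspace W" unfolding subspace_def using W_add W_scale W0 by blast
  have clW: "closed W" by (rule closed_subspace[OF subW])
  define S where "S = (\<lambda>j. C *v u j) ` F"
  have "dim S \<le> card S" by (rule dim_le_card) (auto simp: S_def span_superset)
  also have "card S \<le> card F" unfolding S_def by (rule card_image_le[OF finF])
  finally have "dim S < DIM(real^'n)" using cardF by simp
  then obtain x0 where x0: "x0 \<noteq> 0" "\<And>y. y \<in> span S \<Longrightarrow> orthogonal x0 y"
    using orthogonal_to_subspace_exists by blast
  have x0W: "x0 \<in> W"
  proof -
    { fix j assume j: "j \<in> F"
      hence "C *v u j \<in> span S" unfolding S_def by (intro span_base) auto
      hence "x0 \<bullet> (C *v u j) = 0" using x0(2) by (simp add: orthogonal_def)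
      hence "u j \<bullet> (C *v x0) = 0" using inner_sym_mat[OF symC, of x0 "u j"] by simp }
    thus ?thesis by (simp add: W_def)
  qed
  define K where "K = W \<inter> sphere 0 1"
  have cK: "compact K" unfolding K_def using clW by (intro closed_Int_compact) auto
  have x0K: "(1 / norm x0) *\<^sub>R x0 \<in> K"
    unfolding K_def using x0 W_scale[OF x0W] by auto
  hence neK: "K \<noteq> {}" by blast
  define g where "g x = (x \<bullet> (B *v x)) / (x \<bullet> (C *v x))" for x
  have nzK: "x \<bullet> (C *v x) \<noteq> 0" if "x \<in> K" for x
    using pdC[of x] that by (force simp: K_def)
  have contg: "continuous_on K g" unfolding g_def
    by (intro continuous_on_divide cont_quad) (use nzK in auto)
  obtain v where vK: "v \<in> K" and vmax: "\<And>y. y \<in> K \<Longrightarrow> g y \<le> g v"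
    using continuous_attains_sup[OF cK neK contg] by blast
  define l0 where "l0 = g v"
  have v0: "v \<noteq> 0" and vW: "v \<in> W" using vK by (auto simp: K_def)
  have vC: "v \<bullet> (C *v v) > 0" using pdC[OF v0] .
  have vB: "v \<bullet> (B *v v) = l0 * (v \<bullet> (C *v v))"
    using vC by (simp add: l0_def g_def)
  have le: "y \<bullet> (B *v y) \<le> l0 * (y \<bullet> (C *v y))" if yW: "y \<in> W" for y
  proof (cases "y = 0")
    case True thus ?thesis by simp
  next
    case False
    define c where "c = 1 / norm y"
    have cpos: "c > 0" using False by (simp add: c_def)
    have "c *\<^sub>R y \<in> K" using W_scale[OF yW] False by (auto simp: K_def c_def)
    hence "g (c *\<^sub>R y) \<le> l0" using vmax by (simp add: l0_def)
    moreover have "g (c *\<^sub>R y) = g y" unfolding g_def using cpos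
      by (simp add: matrix_vector_mult_scaleR)
    ultimately have "g y \<le> l0" by simp
    moreover have "y \<bullet> (C *v y) > 0" using pdC[OF False] .
    ultimately show ?thesis unfolding g_def by (simp add: divide_le_eq)
  qed
  have fo: "w \<bullet> (B *v v) = l0 * (w \<bullet> (C *v v))" if wW: "w \<in> W" for w
  proof -
    have "2*e*(w \<bullet> (B *v v) - l0 * (w \<bullet> (C *v v)))
           + e^2 * (w \<bullet> (B *v w) - l0 * (w \<bullet> (C *v w))) \<le> 0" for e
    proof -
      have "v + e *\<^sub>R w \<in> W" using W_add[OF vW W_scale[OF wW]] .
      from le[OF this] show ?thesis
        unfolding quad_expand[OF symB] quad_expand[OF symC] using vB
        by (simp add: algebra_simps)
    qed
    hence "w \<bullet> (B *v v) - l0 * (w \<bullet> (C *v v)) = 0" by (rule quad_zero)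
    thus ?thesis by simp
  qed
  define z where "z = (A ** C) *v v - l0 *\<^sub>R v"
  have CT: "C *v ((A ** C) *v y) = B *v y" for y
    by (simp add: B_def matrix_vector_mul_assoc matrix_mul_assoc)
  have zW: "z \<in> W"
  proof -
    { fix j assume j: "j \<in> F"
      have "u j \<bullet> (C *v ((A ** C) *v v)) = u j \<bullet> (B *v v)" by (simp add: CT)
      also have "\<dots> = v \<bullet> (B *v u j)" by (rule inner_sym_mat[OF symB])
      also have "\<dots> = v \<bullet> (C *v ((A ** C) *v u j))" by (simp add: CT)
      also have "\<dots> = lam j * (v \<bullet> (C *v u j))" by (simp add: eig[OF j] matrix_vector_mult_scaleR)
      also have "v \<bullet> (C *v u j) = u j \<bullet> (C *v v)" by (rule inner_sym_mat[OF symC])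
      also have "\<dots> = 0" using vW j by (simp add: W_def)
      finally have a: "u j \<bullet> (C *v ((A ** C) *v v)) = 0" by simp
      have "u j \<bullet> (C *v z) = 0" using a vW j
        by (simp add: z_def matrix_vector_mult_diff_distrib inner_diff_right
            matrix_vector_mult_scaleR W_def) }
    thus ?thesis by (simp add: W_def)
  qed
  have "z \<bullet> (C *v z) = z \<bullet> (B *v v) - l0 * (z \<bullet> (C *v v))"
    by (simp add: z_def matrix_vector_mult_diff_distrib inner_diff_right
            matrix_vector_mult_scaleR CT)
  also have "\<dots> = 0" using fo[OF zW] by simp
  finally have "z = 0" using pdC[of z] by (cases "z = 0") auto
  hence "(A ** C) *v v = l0 *\<^sub>R v" by (simp add: z_def)
  thus ?thesis using v0 vW by (auto simp: W_def)
qed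

lemma eig_basis:
  fixes A C :: "real^'n^'n"
  assumes symA: "transpose A = A" and symC: "transpose C = C"
    and pdC: "\<And>x. x \<noteq> 0 \<Longrightarrow> 0 < x \<bullet> (C *v x)"
  shows "\<exists>(u::'n \<Rightarrow> real^'n) lam. \<forall>j. u j \<noteq> 0 \<and> (A ** C) *v u j = lam j *\<^sub>R u j \<and>
            (\<forall>i. i \<noteq> j \<longrightarrow> u i \<bullet> (C *v u j) = 0)"
proof -
  have "\<exists>u lam. \<forall>j\<in>F. u j \<noteq> 0 \<and> (A ** C) *v u j = lam j *\<^sub>R u j \<and>
            (\<forall>i\<in>F. i \<noteq> j \<longrightarrow> u i \<bullet> (C *v u j) = 0)" if "finite F" for F :: "'n set"
    using that
  proof (induction F rule: finite_induct)
    case empty thus ?case by auto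
  next
    case (insert a F)
    then obtain u lam where IH: "\<forall>j\<in>F. u j \<noteq> 0 \<and> (A ** C) *v u j = lam j *\<^sub>R u j \<and>
            (\<forall>i\<in>F. i \<noteq> j \<longrightarrow> u i \<bullet> (C *v u j) = 0)" by blast
    have "card F < card (insert a F)" using insert by simp
    also have "\<dots> \<le> CARD('n)" by (rule card_mono) auto
    finally have cF: "card F < CARD('n)" .
    obtain v \<mu> where v: "v \<noteq> 0" "\<forall>j\<in>F. u j \<bullet> (C *v v) = 0" "(A ** C) *v v = \<mu> *\<^sub>R v"
      using eig_step[OF symA symC pdC cF, of u lam] IH by blast
    have v2: "v \<bullet> (C *v u j) = 0" if "j \<in> F" for j
      using v(2) that inner_sym_mat[OF symC, of v "u j"] by simp
    show ?case
      apply (rule exI[of _ "u(a := v)"], rule exI[of _ "lam(a := \<mu>)"])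
      using IH v v2 insert.hyps(2) by auto
  qed
  from this[OF finite[of UNIV]] show ?thesis by simp
qed

lemma gram_entry: fixes u :: "'n \<Rightarrow> real^'n" and C :: "real^'n^'n"
  shows "(transpose (\<chi> i j. u j $ i) ** C ** (\<chi> i j. u j $ i)) $ i $ j = u i \<bullet> (C *v u j)"
  apply (simp add: matrix_matrix_mult_def transpose_def inner_vec_def
        matrix_vector_mult_def sum_distrib_left sum_distrib_right mult.assoc)
  apply (subst sum.swap) apply simp
  done

lemma det_trace_AC:
  fixes A C :: "real^'n^'n"
  assumes symA: "transpose A = A" and psdA: "\<And>x. 0 \<le> x \<bullet> (A *v x)"
    and symC: "transpose C = C"
    and pdC: "\<And>x. x \<noteq> 0 \<Longrightarrow> 0 < x \<bullet> (C *v x)"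
  shows "\<exists>lam::'n\<Rightarrow>real. (\<forall>i. 0 \<le> lam i) \<and> det (A ** C) = (\<Prod>i\<in>UNIV. lam i)
             \<and> trace (A ** C) = (\<Sum>i\<in>UNIV. lam i)"
proof -
  obtain u :: "'n \<Rightarrow> real^'n" and lam where U0: "\<forall>j. u j \<noteq> 0 \<and> (A ** C) *v u j = lam j *\<^sub>R u j \<and>
            (\<forall>i. i \<noteq> j \<longrightarrow> u i \<bullet> (C *v u j) = 0)"
    using eig_basis[of A C] symA symC pdC by blast
  have U: "\<And>j. u j \<noteq> 0" "\<And>j. (A ** C) *v u j = lam j *\<^sub>R u j"
     "\<And>i j. i \<noteq> j \<Longrightarrow> u i \<bullet> (C *v u j) = 0"
    using U0 by auto
  define Q :: "real^'n^'n" where "Q = (\<chi> i j. u j $ i)"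
  define D :: "real^'n^'n" where "D = (\<chi> i j. if i = j then lam i else 0)"
  have TQ: "(A ** C) ** Q = Q ** D"
  proof -
    have "((A ** C) ** Q) $ i $ j = ((A ** C) *v u j) $ i" for i j
      by (simp add: matrix_matrix_mult_def matrix_vector_mult_def Q_def)
    moreover have "(Q ** D) $ i $ j = lam j * u j $ i" for i j
      by (simp add: matrix_matrix_mult_def Q_def D_def if_distrib cong: if_cong)
    ultimately show ?thesis by (simp add: vec_eq_iff U(2) mult.commute)
  qed
  have G: "(transpose Q ** C ** Q) $ i $ j = u i \<bullet> (C *v u j)" for i j
    unfolding Q_def by (rule gram_entry)
  have "det (transpose Q ** C ** Q) = (\<Prod>i\<in>UNIV. u i \<bullet> (C *v u i))"
    by (subst det_diagonal) (auto simp: G U(3))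
  moreover have "(\<Prod>i\<in>UNIV. u i \<bullet> (C *v u i)) > 0"
    using pdC U(1) by (intro prod_pos) auto
  moreover have "det (transpose Q ** C ** Q) = det Q * det C * det Q" by (simp add: det_mul)
  ultimately have "det Q * det C * det Q \<noteq> 0" by (metis less_irrefl)
  hence dQ: "det Q \<noteq> 0" by auto
  have "det (A ** C) * det Q = det Q * det D" using TQ by (metis det_mul)
  moreover have "det D = (\<Prod>i\<in>UNIV. lam i)" by (subst det_diagonal) (auto simp: D_def)
  ultimately have det: "det (A ** C) = (\<Prod>i\<in>UNIV. lam i)" using dQ by simp
  have "invertible Q" using dQ by (simp add: invertible_det_nz)
  then obtain Qi where Qi: "Q ** Qi = mat 1" "Qi ** Q = mat 1" unfolding invertible_def by blast
  have "A ** C = ((A ** C) ** Q) ** Qi" by (simp add: matrix_mul_assoc[symmetric] Qi)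
  also have "\<dots> = Q ** (D ** Qi)" by (simp add: TQ matrix_mul_assoc)
  finally have "trace (A ** C) = trace (Q ** (D ** Qi))" by simp
  also have "\<dots> = trace ((D ** Qi) ** Q)" by (rule trace_mul_sym)
  also have "\<dots> = trace D" by (simp add: matrix_mul_assoc[symmetric] Qi)
  also have "\<dots> = (\<Sum>i\<in>UNIV. lam i)" by (simp add: trace_def D_def)
  finally have tr: "trace (A ** C) = (\<Sum>i\<in>UNIV. lam i)" .
  have nn: "0 \<le> lam i" for i
  proof -
    have "lam i * (u i \<bullet> (C *v u i)) = u i \<bullet> (C *v ((A ** C) *v u i))"
      by (simp add: U(2) matrix_vector_mult_scaleR)
    also have "\<dots> = u i \<bullet> (C *v (A *v (C *v u i)))" by (simp add: matrix_vector_mul_assoc)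
    also have "\<dots> = (A *v (C *v u i)) \<bullet> (C *v u i)" by (rule inner_sym_mat[OF symC])
    also have "\<dots> \<ge> 0" using psdA[of "C *v u i"] by (simp add: inner_commute)
    finally have "0 \<le> lam i * (u i \<bullet> (C *v u i))" .
    moreover have "u i \<bullet> (C *v u i) > 0" using pdC U(1) by auto
    ultimately show ?thesis by (simp add: zero_le_mult_iff)
  qed
  show ?thesis using det tr nn by blast
qed

lemma det_AC_bounds:
  fixes A C :: "real^'n^'n"
  assumes symA: "transpose A = A" and psdA: "\<And>x. 0 \<le> x \<bullet> (A *v x)"
    and symC: "transpose C = C"
    and pdC: "\<And>x. x \<noteq> 0 \<Longrightarrow> 0 < x \<bullet> (C *v x)"
  shows "0 \<le> det (A ** C)" "det (A ** C) \<le> (trace (A ** C) / CARD('n)) ^ CARD('n)"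
proof -
  obtain lam :: "'n \<Rightarrow> real" where L: "\<forall>i. 0 \<le> lam i" "det (A ** C) = (\<Prod>i\<in>UNIV. lam i)"
             "trace (A ** C) = (\<Sum>i\<in>UNIV. lam i)"
    using det_trace_AC[OF assms] by blast
  show "0 \<le> det (A ** C)" using L by (simp add: prod_nonneg)
  show "det (A ** C) \<le> (trace (A ** C) / CARD('n)) ^ CARD('n)"
    using amgm_exp[of "UNIV::'n set" lam] L by simp
qed

lemma card_inj_PiE:
  fixes A :: "'a set" and B :: "'b set"
  assumes "finite A" "finite B" "card A \<le> card B"
  shows "real (card {f \<in> A \<rightarrow>\<^sub>E B. inj_on f A}) = (\<Prod>k<card A. (real (card B) - real k))"
  using assms
proof (induction A arbitrary: B rule: finite_induct)
  case empty
  thus ?case by (simp add: PiE_empty_domain)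
next
  case (insert a A)
  have cA: "card A < card B" using insert by simp
  define X where "X = {(y, g). y \<in> B \<and> g \<in> A \<rightarrow>\<^sub>E (B - {y}) \<and> inj_on g A}"
  have "{f \<in> insert a A \<rightarrow>\<^sub>E B. inj_on f (insert a A)} = (\<lambda>(y, g). g(a:=y)) ` X"
    using extensional_funcset_extend_domain_inj_on_eq[OF insert(2), of B] unfolding X_def by simp
  hence "card {f \<in> insert a A \<rightarrow>\<^sub>E B. inj_on f (insert a A)} = card X"
    using extensional_funcset_extend_domain_inj_onI[OF insert(2), of B]
    by (simp add: card_image X_def)
  also have "X = (SIGMA y:B. {g \<in> A \<rightarrow>\<^sub>E (B - {y}). inj_on g A})" unfolding X_def by auto
  also have "card \<dots> = (\<Sum>y\<in>B. card {g \<in> A \<rightarrow>\<^sub>E (B - {y}). inj_on g A})"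
  proof (rule card_SigmaI)
    show "finite B" by (rule insert.prems(1))
    show "\<forall>y\<in>B. finite {g \<in> A \<rightarrow>\<^sub>E (B - {y}). inj_on g A}"
    proof
      fix y assume "y \<in> B"
      have "finite (A \<rightarrow>\<^sub>E (B - {y}))" using insert by (intro finite_PiE) auto
      thus "finite {g \<in> A \<rightarrow>\<^sub>E (B - {y}). inj_on g A}" by (rule finite_subset[rotated]) auto
    qed
  qed
  finally have eq: "real (card {f \<in> insert a A \<rightarrow>\<^sub>E B. inj_on f (insert a A)}) =
      (\<Sum>y\<in>B. real (card {g \<in> A \<rightarrow>\<^sub>E (B - {y}). inj_on g A}))" by simp
  have "real (card {g \<in> A \<rightarrow>\<^sub>E (B - {y}). inj_on g A}) = (\<Prod>k<card A. (real (card B) - 1 - real k))"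
    if y: "y \<in> B" for y
  proof -
    have cB: "card (B - {y}) = card B - 1" using y insert by simp
    have "card A \<le> card (B - {y})" using cA cB by simp
    hence "real (card {g \<in> A \<rightarrow>\<^sub>E (B - {y}). inj_on g A}) = (\<Prod>k<card A. (real (card (B - {y})) - real k))"
      using insert.IH[of "B - {y}"] insert.prems by simp
    also have "real (card (B - {y})) = real (card B) - 1" using cB cA by simp
    finally show ?thesis .
  qed
  hence "real (card {f \<in> insert a A \<rightarrow>\<^sub>E B. inj_on f (insert a A)}) =
     real (card B) * (\<Prod>k<card A. (real (card B) - 1 - real k))" using eq by simp
  also have "\<dots> = (\<Prod>k<Suc (card A). (real (card B) - real k))"
    by (subst prod.lessThan_Suc_shift) (simp add: algebra_simps)
  also have "Suc (card A) = card (insert a A)" using insert by simp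
  finally show ?case .
qed

lemma prod_inj_integral:
  fixes N :: "'b measure" and f :: "'n::finite \<Rightarrow> nat" and h :: "'n \<Rightarrow> 'b \<Rightarrow> real"
  assumes N: "prob_space N" and inj: "inj f" and rng: "range f \<subseteq> {..<t}"
    and int: "\<And>k. integrable N (h k)"
  shows "integrable (PiM {..<t} (\<lambda>_. N)) (\<lambda>xs. \<Prod>k\<in>UNIV. h k (xs (f k)))"
    "(\<integral>xs. (\<Prod>k\<in>UNIV. h k (xs (f k))) \<partial>PiM {..<t} (\<lambda>_. N)) = (\<Prod>k\<in>UNIV. \<integral>x. h k x \<partial>N)"
proof -
  interpret product_sigma_finite "\<lambda>_::nat. N"
    by (simp add: product_sigma_finite_def prob_space_imp_sigma_finite N)
  interpret N: prob_space N by (rule N)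
  define H where "H i = (\<lambda>x. if i \<in> range f then h (inv f i) x else 1)" for i
  have re: "(\<Prod>i\<in>{..<t}. G i) = (\<Prod>k\<in>UNIV. G (f k))" if "\<And>i. i \<notin> range f \<Longrightarrow> G i = 1"
    for G :: "nat \<Rightarrow> real"
  proof -
    have "(\<Prod>i\<in>{..<t}. G i) = (\<Prod>i\<in>range f. G i)"
      using rng that by (intro prod.mono_neutral_right) auto
    also have "\<dots> = (\<Prod>k\<in>UNIV. G (f k))"
      using inj by (simp add: prod.reindex)
    finally show ?thesis .
  qed
  have eq: "(\<Prod>k\<in>UNIV. h k (xs (f k))) = (\<Prod>i\<in>{..<t}. H i (xs i))" for xs
    by (subst re) (auto simp: H_def inv_f_f[OF inj])
  have intH: "integrable N (H i)" for i
    by (cases "i \<in> range f") (simp_all add: H_def int)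
  show "integrable (PiM {..<t} (\<lambda>_. N)) (\<lambda>xs. \<Prod>k\<in>UNIV. h k (xs (f k)))"
    unfolding eq by (intro product_integrable_prod) (auto intro: intH)
  have "(\<integral>xs. (\<Prod>k\<in>UNIV. h k (xs (f k))) \<partial>PiM {..<t} (\<lambda>_. N))
        = (\<Prod>i\<in>{..<t}. \<integral>x. H i x \<partial>N)"
    unfolding eq by (intro product_integral_prod) (auto intro: intH)
  also have "\<dots> = (\<Prod>k\<in>UNIV. \<integral>x. H (f k) x \<partial>N)"
    by (rule re) (simp add: H_def N.prob_space)
  also have "\<dots> = (\<Prod>k\<in>UNIV. \<integral>x. h k x \<partial>N)"
    by (simp add: H_def inv_f_f[OF inj])
  finally show "(\<integral>xs. (\<Prod>k\<in>UNIV. h k (xs (f k))) \<partial>PiM {..<t} (\<lambda>_. N)) = (\<Prod>k\<in>UNIV. \<integral>x. h k x \<partial>N)" .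
qed

lemma prod_one_minus:
  fixes a :: "nat \<Rightarrow> real"
  assumes "\<And>k. 0 \<le> a k" "\<And>k. a k \<le> 1"
  shows "(\<Prod>k<n. (1 - a k)) \<ge> 1 - (\<Sum>k<n. a k)"
proof (induction n)
  case 0 thus ?case by simp
next
  case (Suc n)
  have P0: "0 \<le> (\<Prod>k<n. (1 - a k))" using assms by (intro prod_nonneg) auto
  have P1: "(\<Prod>k<n. (1 - a k)) \<le> 1" using assms by (intro prod_le_1) auto
  have "(\<Prod>k<Suc n. (1 - a k)) = (\<Prod>k<n. (1 - a k)) - a n * (\<Prod>k<n. (1 - a k))"
    by (simp add: algebra_simps)
  also have "\<dots> \<ge> (\<Prod>k<n. (1 - a k)) - a n"
    using P1 assms[of n] by (simp add: mult_left_le)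
  finally show ?case using Suc by simp
qed

definition yv :: "real^'n^'n \<Rightarrow> real^'n \<Rightarrow> real^'n" where
  "yv S x = (sqrt (real CARD('n)) / sqrt (lev_score S x)) *\<^sub>R x"

lemma rc_entry:
  "rescaled_cov S t xs $ i $ j = (1 / real t) * (\<Sum>k<t. yv S (xs k) $ i * yv S (xs k) $ j)"
  by (simp add: rescaled_cov_def outer_def yv_def)

lemma rc_sym: "transpose (rescaled_cov S t xs) = rescaled_cov S t xs"
  by (simp add: vec_eq_iff transpose_def rc_entry mult.commute)

lemma quad_gram:
  fixes M :: "real^'n^'n" and w :: "'k \<Rightarrow> real^'n"
  assumes "\<And>i j. M $ i $ j = c * (\<Sum>k\<in>K. w k $ i * w k $ j)"
  shows "x \<bullet> (M *v x) = c * (\<Sum>k\<in>K. (x \<bullet> w k)^2)"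
proof -
  have "x \<bullet> (M *v x) = (\<Sum>i\<in>UNIV. x $ i * (\<Sum>j\<in>UNIV. (c * (\<Sum>k\<in>K. w k $ i * w k $ j)) * x $ j))"
    by (simp add: inner_vec_def matrix_vector_mult_def assms)
  also have "\<dots> = c * (\<Sum>i\<in>UNIV. \<Sum>j\<in>UNIV. \<Sum>k\<in>K. (x $ i * w k $ i) * (x $ j * w k $ j))"
    by (simp add: sum_distrib_left sum_distrib_right algebra_simps)
  also have "\<dots> = c * (\<Sum>k\<in>K. \<Sum>i\<in>UNIV. \<Sum>j\<in>UNIV. (x $ i * w k $ i) * (x $ j * w k $ j))"
    by (simp add: sum.swap[of _ K])
  also have "\<dots> = c * (\<Sum>k\<in>K. (x \<bullet> w k)^2)"
    by (simp add: inner_vec_def power2_eq_square sum_product)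
  finally show ?thesis .
qed

lemma trace_gram:
  fixes M L :: "real^'n^'n" and w :: "'k \<Rightarrow> real^'n"
  assumes "\<And>i j. M $ i $ j = c * (\<Sum>k\<in>K. w k $ i * w k $ j)" and "transpose L = L"
  shows "trace (M ** L) = c * (\<Sum>k\<in>K. w k \<bullet> (L *v w k))"
proof -
  have LL: "L $ j $ i = L $ i $ j" for i j using assms(2)
    by (metis transpose_def vec_lambda_beta)
  have "trace (M ** L) = (\<Sum>i\<in>UNIV. \<Sum>j\<in>UNIV. (c * (\<Sum>k\<in>K. w k $ i * w k $ j)) * L $ j $ i)"
    by (simp add: trace_def matrix_matrix_mult_def assms(1))
  also have "\<dots> = c * (\<Sum>i\<in>UNIV. \<Sum>j\<in>UNIV. \<Sum>k\<in>K. w k $ i * (L $ i $ j * w k $ j))"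
    by (simp add: sum_distrib_left sum_distrib_right algebra_simps LL)
  also have "\<dots> = c * (\<Sum>k\<in>K. \<Sum>i\<in>UNIV. \<Sum>j\<in>UNIV. w k $ i * (L $ i $ j * w k $ j))"
    by (simp add: sum.swap[of _ K])
  also have "\<dots> = c * (\<Sum>k\<in>K. w k \<bullet> (L *v w k))"
    by (simp add: inner_vec_def matrix_vector_mult_def sum_distrib_left)
  finally show ?thesis .
qed

lemma pd_facts:
  fixes S :: "real^'n^'n"
  assumes pd: "pos_def_mat S"
  shows "S ** matrix_inv S = mat 1" "matrix_inv S ** S = mat 1"
    "transpose (matrix_inv S) = matrix_inv S"
    "\<And>x. x \<noteq> 0 \<Longrightarrow> 0 < x \<bullet> (matrix_inv S *v x)"
    "\<And>x. 0 \<le> x \<bullet> (matrix_inv S *v x)"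
proof -
  have symS: "transpose S = S" and pS: "\<And>x. x \<noteq> 0 \<Longrightarrow> 0 < x \<bullet> (S *v x)"
    using pd by (auto simp: pos_def_mat_def)
  have inj: "inj ((*v) S)"
  proof (rule injI)
    fix x y assume "S *v x = S *v y"
    hence "S *v (x - y) = 0" by (simp add: matrix_vector_mult_diff_distrib)
    thus "x = y" using pS[of "x - y"] by (cases "x = y") auto
  qed
  have "det (matrix ((*v) S)) \<noteq> 0"
    using inj by (subst det_nz_iff_inj) auto
  hence "det S \<noteq> 0" by (simp add: matrix_of_matrix_vector_mul)
  hence "invertible S" by (simp add: invertible_det_nz)
  hence "\<exists>A'. S ** A' = mat 1 \<and> A' ** S = mat 1" by (simp add: invertible_def)
  hence I: "S ** matrix_inv S = mat 1 \<and> matrix_inv S ** S = mat 1"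
    unfolding matrix_inv_def by (rule someI_ex)
  thus I1: "S ** matrix_inv S = mat 1" and I2: "matrix_inv S ** S = mat 1" by auto
  define L where "L = matrix_inv S"
  have "transpose L ** S = mat 1"
    by (metis I1 L_def matrix_transpose_mul symS transpose_mat)
  hence "transpose L = (transpose L ** S) ** L"
    by (metis I1 L_def matrix_mul_assoc matrix_mul_rid)
  also have "\<dots> = L" using \<open>transpose L ** S = mat 1\<close> by simp
  finally show symL: "transpose (matrix_inv S) = matrix_inv S" unfolding L_def .
  have key: "x \<bullet> (matrix_inv S *v x) = (matrix_inv S *v x) \<bullet> (S *v (matrix_inv S *v x))" for x
  proof -
    have "S *v (matrix_inv S *v x) = x" by (simp add: matrix_vector_mul_assoc I1)
    thus ?thesis by (simp add: inner_commute)
  qed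
  show "0 < x \<bullet> (matrix_inv S *v x)" if "x \<noteq> 0" for x
  proof -
    have "matrix_inv S *v x \<noteq> 0"
    proof
      assume "matrix_inv S *v x = 0"
      hence "S *v (matrix_inv S *v x) = 0" by simp
      thus False using that by (simp add: matrix_vector_mul_assoc I1)
    qed
    thus ?thesis using pS key by simp
  qed
  show "0 \<le> x \<bullet> (matrix_inv S *v x)" for x
    using pS[of "matrix_inv S *v x"] key[of x] by (cases "matrix_inv S *v x = 0") auto
qed

lemma lev_nonneg: "pos_def_mat S \<Longrightarrow> 0 \<le> lev_score S x"
  unfolding lev_score_def using pd_facts(5) by blast

lemma lev_zero: "pos_def_mat S \<Longrightarrow> lev_score S x = 0 \<Longrightarrow> x = 0"
  unfolding lev_score_def using pd_facts(4) by fastforce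

lemma lev_scale: "lev_score S (c *\<^sub>R x) = c^2 * lev_score S x"
  by (simp add: lev_score_def matrix_vector_mult_scaleR power2_eq_square)

lemma lev_yv:
  fixes S :: "real^'n^'n"
  assumes "pos_def_mat S"
  shows "lev_score S (yv S x) \<le> real CARD('n)" "0 \<le> lev_score S (yv S x)"
proof -
  have l0: "0 \<le> lev_score S x" using lev_nonneg[OF assms] .
  have "lev_score S (yv S x) = (sqrt (real CARD('n)) / sqrt (lev_score S x))^2 * lev_score S x"
    by (simp add: yv_def lev_scale)
  also have "\<dots> = (if lev_score S x = 0 then 0 else real CARD('n))"
    using l0 by (simp add: power_divide)
  finally show "lev_score S (yv S x) \<le> real CARD('n)" "0 \<le> lev_score S (yv S x)" by auto
qed

lemma rc_psd: "0 \<le> x \<bullet> (rescaled_cov S t xs *v x)"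
proof -
  have "x \<bullet> (rescaled_cov S t xs *v x) = (1 / real t) * (\<Sum>k\<in>{..<t}. (x \<bullet> yv S (xs k))^2)"
    by (rule quad_gram) (rule rc_entry)
  also have "\<dots> \<ge> 0" by (intro mult_nonneg_nonneg sum_nonneg) auto
  finally show ?thesis .
qed

lemma rc_trace:
  fixes S :: "real^'n^'n"
  assumes "pos_def_mat S"
  shows "0 \<le> trace (rescaled_cov S t xs ** matrix_inv S)"
     "trace (rescaled_cov S t xs ** matrix_inv S) \<le> real CARD('n)"
proof -
  have eq: "trace (rescaled_cov S t xs ** matrix_inv S) =
      (1 / real t) * (\<Sum>k\<in>{..<t}. lev_score S (yv S (xs k)))"
    unfolding lev_score_def by (rule trace_gram) (rule rc_entry, rule pd_facts(3)[OF assms])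
  show "0 \<le> trace (rescaled_cov S t xs ** matrix_inv S)"
    unfolding eq using lev_yv[OF assms] by (intro mult_nonneg_nonneg sum_nonneg) auto
  have "(\<Sum>k\<in>{..<t}. lev_score S (yv S (xs k))) \<le> (\<Sum>k\<in>{..<t}. real CARD('n))"
    using lev_yv[OF assms] by (intro sum_mono) auto
  hence "(\<Sum>k\<in>{..<t}. lev_score S (yv S (xs k))) \<le> real t * real CARD('n)" by simp
  thus "trace (rescaled_cov S t xs ** matrix_inv S) \<le> real CARD('n)"
    unfolding eq by (cases "t = 0") (auto simp: field_simps)
qed

lemma det_rc_le1:
  fixes S :: "real^'n^'n"
  assumes "pos_def_mat S"
  shows "det (rescaled_cov S t xs ** matrix_inv S) \<le> 1"
proof -
  let ?T = "trace (rescaled_cov S t xs ** matrix_inv S)"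
  have "det (rescaled_cov S t xs ** matrix_inv S) \<le> (?T / CARD('n)) ^ CARD('n)"
    by (rule det_AC_bounds(2)[OF rc_sym rc_psd pd_facts(3)[OF assms] pd_facts(4)[OF assms]])
  also have "\<dots> \<le> 1"
    using rc_trace[OF assms] by (intro power_le_one) (auto simp: divide_le_eq)
  finally show ?thesis .
qed

lemma lev_cont: "continuous_on A (lev_score S)"
  unfolding lev_score_def by (rule cont_quad)

lemma nth_cont: "continuous_on A (\<lambda>x::real^'n. x $ i)"
  by (intro linear_continuous_on bounded_linear_vec_nth)

lemma lev_borel[measurable]: "lev_score S \<in> borel_measurable borel"
  by (intro borel_measurable_continuous_onI lev_cont)

lemma nth_borel[measurable]: "(\<lambda>x::real^'n. x $ i) \<in> borel_measurable borel"
  by (intro borel_measurable_continuous_onI nth_cont)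

lemma yv_borel[measurable]: "(\<lambda>x. yv S x $ i) \<in> borel_measurable borel"
  unfolding yv_def by simp

lemma lev_expand: "lev_score S x = (\<Sum>i\<in>UNIV. \<Sum>j\<in>UNIV. matrix_inv S $ i $ j * (x $ i * x $ j))"
  by (simp add: lev_score_def inner_vec_def matrix_vector_mult_def sum_distrib_left algebra_simps)

context
  fixes D :: "(real^'n) measure" and S :: "real^'n^'n"
  assumes D: "prob_space D" and sD: "sets D = sets borel"
    and int2: "integrable D (\<lambda>x. (norm x)\<^sup>2)"
    and invM: "invertible (second_moment D)" and pd: "pos_def_mat S"
begin

interpretation D: prob_space D by (rule D)

lemma mD: "f \<in> borel_measurable borel \<Longrightarrow> f \<in> borel_measurable D"
  by (metis measurable_cong_sets[OF sD refl])

lemma int_xx: "integrable D (\<lambda>x. x $ i * x $ j)"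
proof (rule Bochner_Integration.integrable_bound[OF int2])
  show "(\<lambda>x. x $ i * x $ j) \<in> borel_measurable D" by (intro mD) simp
  show "AE x in D. norm (x $ i * x $ j) \<le> norm ((norm x)\<^sup>2)"
  proof (intro AE_I2)
    fix x :: "real^'n"
    have "\<bar>x $ i\<bar> * \<bar>x $ j\<bar> \<le> norm x * norm x"
      by (intro mult_mono component_le_norm_cart) auto
    thus "norm (x $ i * x $ j) \<le> norm ((norm x)\<^sup>2)" by (simp add: abs_mult power2_eq_square)
  qed
qed

lemma int_lev: "integrable D (lev_score S)"
  unfolding lev_expand[abs_def] by (simp add: int_xx)

lemma tau_eq: "trace (second_moment D ** matrix_inv S) = (\<integral>x. lev_score S x \<partial>D)"
proof -
  have LL: "matrix_inv S $ j $ i = matrix_inv S $ i $ j" for i j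
    using pd_facts(3)[OF pd] by (metis transpose_def vec_lambda_beta)
  have "trace (second_moment D ** matrix_inv S) =
      (\<Sum>i\<in>UNIV. \<Sum>j\<in>UNIV. matrix_inv S $ i $ j * (\<integral>x. x $ i * x $ j \<partial>D))"
    by (simp add: trace_def matrix_matrix_mult_def second_moment_def LL mult.commute)
  also have "\<dots> = (\<integral>x. lev_score S x \<partial>D)"
    unfolding lev_expand using int_xx by (simp add: integral_sum)
  finally show ?thesis .
qed

lemma tau_pos: "0 < trace (second_moment D ** matrix_inv S)"
proof -
  have nn: "AE x in D. 0 \<le> lev_score S x" using lev_nonneg[OF pd] by simp
  have ge: "0 \<le> (\<integral>x. lev_score S x \<partial>D)" using nn by (rule integral_nonneg_AE)
  show ?thesis
  proof (rule ccontr)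
    assume "\<not> ?thesis"
    hence "(\<integral>x. lev_score S x \<partial>D) = 0" using ge tau_eq by simp
    hence "AE x in D. lev_score S x = 0"
      using integral_nonneg_eq_0_iff_AE[OF int_lev nn] by simp
    hence AE0: "AE x in D. x = 0" using lev_zero[OF pd] by auto
    have "second_moment D = mat 0"
    proof -
      have "(\<integral>x. x $ i * x $ j \<partial>D) = 0" for i j
      proof (rule integral_eq_zero_AE)
        show "AE x in D. x $ i * x $ j = 0" using AE0 by eventually_elim simp
      qed
      thus ?thesis by (simp add: second_moment_def vec_eq_iff mat_def)
    qed
    hence "det (second_moment D) = 0" by (metis det_0)
    thus False using invM by (simp add: invertible_det_nz)
  qed
qed

end

context
  fixes D :: "(real^'n) measure" and S :: "real^'n^'n"
  assumes D: "prob_space D" and sD: "sets D = sets borel"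
    and int2: "integrable D (\<lambda>x. (norm x)\<^sup>2)"
    and invM: "invertible (second_moment D)" and pd: "pos_def_mat S"
begin

interpretation D: prob_space D by (rule D)

abbreviation "tau \<equiv> trace (second_moment D ** matrix_inv S)"

lemma rho_meas: "(\<lambda>x. lev_score S x / tau) \<in> borel_measurable D"
  by (intro mD[OF D sD int2 invM pd]) simp

lemma rho_nn: "0 \<le> lev_score S x / tau"
  using lev_nonneg[OF pd] tau_pos[OF D sD int2 invM pd] by simp

lemma nu_prob: "prob_space (lev_measure S D)"
proof
  have "emeasure (lev_measure S D) (space (lev_measure S D)) =
      (\<integral>\<^sup>+ x. ennreal (lev_score S x / tau) * indicator (space D) x \<partial>D)"
    unfolding lev_measure_def using rho_meas by (simp add: emeasure_density)
  also have "\<dots> = (\<integral>\<^sup>+ x. ennreal (lev_score S x / tau) \<partial>D)"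
    by (intro nn_integral_cong) (simp add: indicator_def)
  also have "\<dots> = ennreal (\<integral>x. lev_score S x / tau \<partial>D)"
    using int_lev[OF D sD int2 invM pd] rho_nn by (intro nn_integral_eq_integral) auto
  also have "(\<integral>x. lev_score S x / tau \<partial>D) = (\<integral>x. lev_score S x \<partial>D) / tau"
    by simp
  also have "\<dots> = 1" using tau_eq[OF D sD int2 invM pd] tau_pos[OF D sD int2 invM pd] by simp
  finally show "emeasure (lev_measure S D) (space (lev_measure S D)) = 1" by simp
qed

lemma rho_g: "(lev_score S x / tau) * (yv S x $ a * yv S x $ b) =
    (real CARD('n) / tau) * (x $ a * x $ b)"
proof (cases "lev_score S x = 0")
  case True
  hence "x = 0" by (rule lev_zero[OF pd])
  thus ?thesis by (simp add: yv_def)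
next
  case False
  have l: "lev_score S x > 0" using False lev_nonneg[OF pd, of x] by simp
  have "yv S x $ a * yv S x $ b = (sqrt (real CARD('n)) / sqrt (lev_score S x))^2 * (x $ a * x $ b)"
    by (simp add: yv_def power2_eq_square algebra_simps)
  also have "(sqrt (real CARD('n)) / sqrt (lev_score S x))^2 = real CARD('n) / lev_score S x"
    using l by (simp add: power_divide)
  finally show ?thesis using l by (simp add: field_simps)
qed

lemma nu_int: "integrable (lev_measure S D) (\<lambda>x. yv S x $ a * yv S x $ b)"
  and nu_integral: "(\<integral>x. yv S x $ a * yv S x $ b \<partial>lev_measure S D) =
          (real CARD('n) / tau) * second_moment D $ a $ b"
proof -
  have gm: "(\<lambda>x. yv S x $ a * yv S x $ b) \<in> borel_measurable D"
    by (intro mD[OF D sD int2 invM pd]) simp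
  have "integrable (lev_measure S D) (\<lambda>x. yv S x $ a * yv S x $ b) \<longleftrightarrow>
      integrable D (\<lambda>x. (lev_score S x / tau) *\<^sub>R (yv S x $ a * yv S x $ b))"
    unfolding lev_measure_def using gm rho_meas rho_nn by (intro integrable_density) auto
  also have "\<dots> \<longleftrightarrow> integrable D (\<lambda>x. (real CARD('n) / tau) * (x $ a * x $ b))"
    by (simp only: real_scaleR_def rho_g)
  finally show "integrable (lev_measure S D) (\<lambda>x. yv S x $ a * yv S x $ b)"
    using int_xx[OF D sD int2 invM pd] by simp
  have "(\<integral>x. yv S x $ a * yv S x $ b \<partial>lev_measure S D) =
      (\<integral>x. (lev_score S x / tau) *\<^sub>R (yv S x $ a * yv S x $ b) \<partial>D)"
    unfolding lev_measure_def using gm rho_meas rho_nn by (intro integral_density) auto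
  also have "\<dots> = (\<integral>x. (real CARD('n) / tau) * (x $ a * x $ b) \<partial>D)"
    by (simp only: real_scaleR_def rho_g)
  also have "\<dots> = (real CARD('n) / tau) * second_moment D $ a $ b"
    by (simp add: second_moment_def)
  finally show "(\<integral>x. yv S x $ a * yv S x $ b \<partial>lev_measure S D) =
          (real CARD('n) / tau) * second_moment D $ a $ b" .
qed

end

lemma prod_one_minus':
  fixes a :: "nat \<Rightarrow> real"
  shows "(\<forall>k<n. 0 \<le> a k \<and> a k \<le> 1) \<longrightarrow> (\<Prod>k<n. (1 - a k)) \<ge> 1 - (\<Sum>k<n. a k)"
proof (induction n)
  case 0 thus ?case by simp
next
  case (Suc n)
  show ?case
  proof
    assume A: "\<forall>k<Suc n. 0 \<le> a k \<and> a k \<le> 1"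
    hence IH: "(\<Prod>k<n. (1 - a k)) \<ge> 1 - (\<Sum>k<n. a k)" using Suc by auto
    have P1: "(\<Prod>k<n. (1 - a k)) \<le> 1" using A by (intro prod_le_1) auto
    have an: "0 \<le> a n" "a n \<le> 1" using A by auto
    have "(\<Prod>k<Suc n. (1 - a k)) = (\<Prod>k<n. (1 - a k)) - a n * (\<Prod>k<n. (1 - a k))"
      by (simp add: algebra_simps)
    also have "\<dots> \<ge> (\<Prod>k<n. (1 - a k)) - a n"
      using P1 an by (simp add: mult_left_le)
    finally show "(\<Prod>k<Suc n. (1 - a k)) \<ge> 1 - (\<Sum>k<Suc n. a k)" using IH by simp
  qed
qed

definition Mf :: "real^'n^'n \<Rightarrow> nat \<Rightarrow> ('n \<Rightarrow> nat) \<Rightarrow> (nat \<Rightarrow> real^'n) \<Rightarrow> real^'n^'n" where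
  "Mf S t f xs = (\<chi> k j. (1 / real t) * (yv S (xs (f k)) $ k * yv S (xs (f k)) $ j))"

lemma det_rc_expand:
  fixes S :: "real^'n^'n"
  shows "det (rescaled_cov S t xs) = (\<Sum>f \<in> (UNIV::'n set) \<rightarrow>\<^sub>E {..<t}. det (Mf S t f xs))"
proof -
  have "det (rescaled_cov S t xs) = (\<Sum>p\<in>{p. p permutes (UNIV::'n set)}. of_int (sign p) *
      (\<Prod>k\<in>UNIV. \<Sum>i\<in>{..<t}. (1 / real t) * (yv S (xs i) $ k * yv S (xs i) $ p k)))"
    unfolding det_def by (simp add: rc_entry sum_distrib_left)
  also have "\<dots> = (\<Sum>p\<in>{p. p permutes (UNIV::'n set)}. of_int (sign p) *
      (\<Sum>f\<in>(UNIV::'n set) \<rightarrow>\<^sub>E {..<t}. \<Prod>k\<in>UNIV. (1 / real t) * (yv S (xs (f k)) $ k * yv S (xs (f k)) $ p k)))"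
    by (subst prod_sum_PiE) auto
  also have "\<dots> = (\<Sum>p\<in>{p. p permutes (UNIV::'n set)}. \<Sum>f\<in>(UNIV::'n set) \<rightarrow>\<^sub>E {..<t}. of_int (sign p) *
      (\<Prod>k\<in>UNIV. (1 / real t) * (yv S (xs (f k)) $ k * yv S (xs (f k)) $ p k)))"
    by (simp add: sum_distrib_left)
  also have "\<dots> = (\<Sum>f\<in>(UNIV::'n set) \<rightarrow>\<^sub>E {..<t}. \<Sum>p\<in>{p. p permutes (UNIV::'n set)}. of_int (sign p) *
      (\<Prod>k\<in>UNIV. (1 / real t) * (yv S (xs (f k)) $ k * yv S (xs (f k)) $ p k)))"
    by (rule sum.swap)
  also have "\<dots> = (\<Sum>f \<in> (UNIV::'n set) \<rightarrow>\<^sub>E {..<t}. det (Mf S t f xs))"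
    by (simp add: det_def Mf_def)
  finally show ?thesis .
qed

lemma det_noninj:
  fixes S :: "real^'n^'n"
  assumes "\<not> inj f"
  shows "det (Mf S t f xs) = 0"
proof -
  have "Mf S t f xs = (\<chi> k. ((1 / real t) * yv S (xs (f k)) $ k) *s yv S (xs (f k)))"
    by (simp add: Mf_def vec_eq_iff mult.assoc)
  hence "det (Mf S t f xs) = (\<Prod>k\<in>UNIV. (1 / real t) * yv S (xs (f k)) $ k) *
      det (\<chi> k. yv S (xs (f k)))" by (simp add: det_rows_mul)
  moreover obtain k1 k2 where "k1 \<noteq> k2" "f k1 = f k2" using assms unfolding inj_def by blast
  hence "det (\<chi> k. yv S (xs (f k))) = 0"
    by (intro det_identical_rows[of k1 k2]) (auto simp: row_def)
  ultimately show ?thesis by simp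
qed

lemma det_Mf: "det (Mf S t f xs) = (\<Sum>p\<in>{p. p permutes (UNIV::'n set)}. of_int (sign p) *
      (\<Prod>k\<in>UNIV. (1 / real t) * (yv S (xs (f k)) $ k * yv S (xs (f k)) $ p k)))"
  for S :: "real^'n^'n"
  by (simp add: det_def Mf_def)

context
  fixes D :: "(real^'n) measure" and S :: "real^'n^'n" and t :: nat
  assumes D: "prob_space D" and sD: "sets D = sets borel"
    and int2: "integrable D (\<lambda>x. (norm x)\<^sup>2)"
    and invM: "invertible (second_moment D)" and pd: "pos_def_mat S"
begin

abbreviation "cc \<equiv> (1 / real t) * (real CARD('n) / trace (second_moment D ** matrix_inv S))"

lemma E_Mf:
  assumes f: "f \<in> (UNIV::'n set) \<rightarrow>\<^sub>E {..<t}" and inj: "inj f"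
  shows "integrable (PiM {..<t} (\<lambda>_. lev_measure S D)) (\<lambda>xs. det (Mf S t f xs))"
    "(\<integral>xs. det (Mf S t f xs) \<partial>PiM {..<t} (\<lambda>_. lev_measure S D)) = cc ^ CARD('n) * det (second_moment D)"
proof -
  let ?P = "PiM {..<t} (\<lambda>_. lev_measure S D)"
  have rng: "range f \<subseteq> {..<t}" using f by (auto simp: PiE_def Pi_def)
  have nu: "prob_space (lev_measure S D)" by (rule nu_prob[OF D sD int2 invM pd])
  have hint: "integrable (lev_measure S D) (\<lambda>x. (1 / real t) * (yv S x $ k * yv S x $ p k))" for p k
    using nu_int[OF D sD int2 invM pd] by simp
  have PI1: "integrable ?P (\<lambda>xs. \<Prod>k\<in>UNIV. (1 / real t) * (yv S (xs (f k)) $ k * yv S (xs (f k)) $ p k))" for p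
    using prod_inj_integral(1)[OF nu inj rng, of "\<lambda>k x. (1 / real t) * (yv S x $ k * yv S x $ p k)"] hint
    by blast
  have PI2: "(\<integral>xs. (\<Prod>k\<in>UNIV. (1 / real t) * (yv S (xs (f k)) $ k * yv S (xs (f k)) $ p k)) \<partial>?P)
     = (\<Prod>k\<in>UNIV. \<integral>x. (1 / real t) * (yv S x $ k * yv S x $ p k) \<partial>lev_measure S D)" for p
    using prod_inj_integral(2)[OF nu inj rng, of "\<lambda>k x. (1 / real t) * (yv S x $ k * yv S x $ p k)"] hint
    by blast
  show "integrable ?P (\<lambda>xs. det (Mf S t f xs))"
    unfolding det_Mf using PI1 by (intro Bochner_Integration.integrable_sum integrable_mult_right) auto
  have "(\<integral>xs. det (Mf S t f xs) \<partial>?P) = (\<Sum>p\<in>{p. p permutes (UNIV::'n set)}. of_int (sign p) *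
      (\<integral>xs. (\<Prod>k\<in>UNIV. (1 / real t) * (yv S (xs (f k)) $ k * yv S (xs (f k)) $ p k)) \<partial>?P))"
    unfolding det_Mf using PI1
    by (subst Bochner_Integration.integral_sum) (auto intro!: integrable_mult_right)
  also have "\<dots> = (\<Sum>p\<in>{p. p permutes (UNIV::'n set)}. of_int (sign p) *
      (\<Prod>k\<in>UNIV. \<integral>x. (1 / real t) * (yv S x $ k * yv S x $ p k) \<partial>lev_measure S D))"
    by (simp only: PI2)
  also have "\<dots> = (\<Sum>p\<in>{p. p permutes (UNIV::'n set)}. of_int (sign p) *
      (\<Prod>k\<in>UNIV. cc * second_moment D $ k $ p k))"
    by (simp add: nu_integral[OF D sD int2 invM pd] mult.assoc mult.commute[of "real t"])
  also have "\<dots> = (\<Sum>p\<in>{p. p permutes (UNIV::'n set)}. of_int (sign p) *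
      (cc ^ CARD('n) * (\<Prod>k\<in>UNIV. second_moment D $ k $ p k)))"
    by (simp only: prod.distrib prod_constant power_mult_distrib)
  also have "\<dots> = cc ^ CARD('n) * det (second_moment D)"
    unfolding det_def sum_distrib_left by (simp only: mult.left_commute)
  finally show "(\<integral>xs. det (Mf S t f xs) \<partial>?P) = cc ^ CARD('n) * det (second_moment D)" .
qed

lemma E_rc:
  shows "integrable (PiM {..<t} (\<lambda>_. lev_measure S D)) (\<lambda>xs. det (rescaled_cov S t xs))"
    "(\<integral>xs. det (rescaled_cov S t xs) \<partial>PiM {..<t} (\<lambda>_. lev_measure S D)) =
       real (card {f \<in> (UNIV::'n set) \<rightarrow>\<^sub>E {..<t}. inj_on f UNIV}) * (cc ^ CARD('n) * det (second_moment D))"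
proof -
  let ?P = "PiM {..<t} (\<lambda>_. lev_measure S D)"
  let ?F = "(UNIV::'n set) \<rightarrow>\<^sub>E {..<t}"
  let ?I = "{f \<in> ?F. inj_on f UNIV}"
  have finF: "finite ?F" by (intro finite_PiE) auto
  have eq: "det (rescaled_cov S t xs) = (\<Sum>f\<in>?I. det (Mf S t f xs))" for xs
  proof -
    have "det (rescaled_cov S t xs) = (\<Sum>f\<in>?F. det (Mf S t f xs))" by (rule det_rc_expand)
    also have "\<dots> = (\<Sum>f\<in>?I. det (Mf S t f xs))"
      using finF det_noninj by (intro sum.mono_neutral_right) auto
    finally show ?thesis .
  qed
  show "integrable ?P (\<lambda>xs. det (rescaled_cov S t xs))"
    unfolding eq using E_Mf(1) by (intro Bochner_Integration.integrable_sum) auto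
  have "(\<integral>xs. det (rescaled_cov S t xs) \<partial>?P) = (\<Sum>f\<in>?I. \<integral>xs. det (Mf S t f xs) \<partial>?P)"
    unfolding eq using E_Mf(1) by (intro Bochner_Integration.integral_sum) auto
  also have "\<dots> = (\<Sum>f\<in>?I. cc ^ CARD('n) * det (second_moment D))"
    using E_Mf(2) by (intro sum.cong) auto
  also have "\<dots> = real (card ?I) * (cc ^ CARD('n) * det (second_moment D))" by simp
  finally show "(\<integral>xs. det (rescaled_cov S t xs) \<partial>?P) =
       real (card ?I) * (cc ^ CARD('n) * det (second_moment D))" .
qed

end

lemma sm_sym: "transpose (second_moment D) = second_moment D"
  by (simp add: vec_eq_iff transpose_def second_moment_def mult.commute)

lemma sm_psd:
  fixes D :: "(real^'a) measure" and S :: "real^'a^'a"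
  assumes D: "prob_space D" and sD: "sets D = sets borel"
    and int2: "integrable D (\<lambda>x. (norm x)\<^sup>2)"
    and invM: "invertible (second_moment D)" and pd: "pos_def_mat S"
  shows "0 \<le> v \<bullet> (second_moment D *v v)"
proof -
  have ix: "integrable D (\<lambda>x. x $ i * x $ j)" for i j by (rule int_xx[OF D sD int2 invM pd])
  have "v \<bullet> (second_moment D *v v) = (\<Sum>i\<in>UNIV. \<Sum>j\<in>UNIV. (v $ i * v $ j) * (\<integral>x. x $ i * x $ j \<partial>D))"
    by (simp add: inner_vec_def matrix_vector_mult_def second_moment_def sum_distrib_left algebra_simps)
  also have "\<dots> = (\<integral>x. (\<Sum>i\<in>UNIV. \<Sum>j\<in>UNIV. (v $ i * v $ j) * (x $ i * x $ j)) \<partial>D)"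
    using ix by simp
  also have "\<dots> \<ge> 0"
  proof (intro integral_nonneg_AE AE_I2)
    fix x :: "real^'a"
    have "(\<Sum>i\<in>UNIV. \<Sum>j\<in>UNIV. (v $ i * v $ j) * (x $ i * x $ j)) = (\<Sum>i\<in>UNIV. v $ i * x $ i)^2"
      by (simp add: power2_eq_square sum_product algebra_simps)
    thus "0 \<le> (\<Sum>i\<in>UNIV. \<Sum>j\<in>UNIV. (v $ i * v $ j) * (x $ i * x $ j))" by simp
  qed
  finally show ?thesis .
qed

theorem lemma5:
  fixes D :: "(real^'n) measure" and S :: "real^'n^'n" and t :: nat
  assumes "prob_space D"
    and "sets D = sets borel"
    and "integrable D (\<lambda>x. (norm x)\<^sup>2)"
    and "invertible (second_moment D)"
    and "pos_def_mat S"
    and "t \<ge> CARD('n)"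
  shows "(AE xs in PiM {..<t} (\<lambda>_. lev_measure S D).
           det (rescaled_cov S t xs ** matrix_inv S) \<le> 1)
    \<and> (\<integral>xs. det (rescaled_cov S t xs ** matrix_inv S) \<partial>PiM {..<t} (\<lambda>_. lev_measure S D))
         \<ge> (1 - (real CARD('n))\<^sup>2 / real t) *
            (det (second_moment D ** matrix_inv S) /
             ((1 / real CARD('n)) * trace (second_moment D ** matrix_inv S)) ^ CARD('n))"
proof
  note A = assms(1-5)
  let ?P = "PiM {..<t} (\<lambda>_. lev_measure S D)"
  let ?d = "CARD('n)"
  let ?L = "matrix_inv S"
  let ?M = "second_moment D"
  let ?tau = "trace (?M ** ?L)"
  let ?I = "{f \<in> (UNIV::'n set) \<rightarrow>\<^sub>E {..<t}. inj_on f UNIV}"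
  show "AE xs in ?P. det (rescaled_cov S t xs ** ?L) \<le> 1"
    by (intro AE_I2 det_rc_le1[OF assms(5)])
  have taup: "?tau > 0" by (rule tau_pos[OF A])
  have dpos: "real ?d > 0" by simp
  have tpos: "real t > 0" using assms(6) dpos by linarith
  have card: "real (card ?I) = (\<Prod>k<?d. (real t - real k))"
    using card_inj_PiE[of "UNIV::'n set" "{..<t}"] assms(6) by simp
  have "(\<integral>xs. det (rescaled_cov S t xs ** ?L) \<partial>?P) = (\<integral>xs. det (rescaled_cov S t xs) \<partial>?P) * det ?L"
    by (simp add: det_mul)
  also have "\<dots> = real (card ?I) * ((1 / real t) ^ ?d * (real ?d / ?tau) ^ ?d * det ?M) * det ?L"
    by (simp only: E_rc(2)[OF A] power_mult_distrib)
  also have "\<dots> = (\<Prod>k<?d. (1 - real k / real t)) * ((real ?d / ?tau) ^ ?d * det (?M ** ?L))"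
  proof -
    have "real (card ?I) * (1 / real t) ^ ?d = (\<Prod>k<?d. (real t - real k) * (1 / real t))"
      by (simp only: card prod.distrib prod_constant card_lessThan)
    also have "\<dots> = (\<Prod>k<?d. (1 - real k / real t))"
      using tpos by (intro prod.cong) (auto simp: field_simps)
    finally have e: "real (card ?I) * (1 / real t) ^ ?d = (\<Prod>k<?d. (1 - real k / real t))" .
    show ?thesis by (simp add: e[symmetric] det_mul algebra_simps)
  qed
  finally have E: "(\<integral>xs. det (rescaled_cov S t xs ** ?L) \<partial>?P) =
     (\<Prod>k<?d. (1 - real k / real t)) * ((real ?d / ?tau) ^ ?d * det (?M ** ?L))" .
  define X where "X = (real ?d / ?tau) ^ ?d * det (?M ** ?L)"
  have X0: "0 \<le> X"
    unfolding X_def using taup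
    by (intro mult_nonneg_nonneg det_AC_bounds(1)[OF sm_sym sm_psd[OF A] pd_facts(3)[OF assms(5)]
         pd_facts(4)[OF assms(5)]]) auto
  have RX: "det (?M ** ?L) / ((1 / real ?d) * ?tau) ^ ?d = X"
    unfolding X_def using taup dpos by (simp add: field_simps power_divide)
  have sumk: "(\<Sum>k<?d. real k / real t) \<le> (real ?d)\<^sup>2 / real t"
  proof -
    have "(\<Sum>k<?d. real k / real t) \<le> (\<Sum>k<?d. real ?d / real t)"
      using tpos by (intro sum_mono) (auto simp: divide_right_mono)
    also have "\<dots> = (real ?d)\<^sup>2 / real t" by (simp add: power2_eq_square)
    finally show ?thesis .
  qed
  have "(\<Prod>k<?d. (1 - real k / real t)) \<ge> 1 - (\<Sum>k<?d. real k / real t)"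
    using prod_one_minus'[of ?d "\<lambda>k. real k / real t"] assms(6) tpos by auto
  hence pr: "(\<Prod>k<?d. (1 - real k / real t)) \<ge> 1 - (real ?d)\<^sup>2 / real t" using sumk by linarith
  show "(\<integral>xs. det (rescaled_cov S t xs ** ?L) \<partial>?P) \<ge>
      (1 - (real ?d)\<^sup>2 / real t) * (det (?M ** ?L) / ((1 / real ?d) * ?tau) ^ ?d)"
    unfolding E RX X_def[symmetric] using pr X0 by (intro mult_right_mono) auto
qed

end
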